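(* Let $f:(N,F,\{F_\sigma\})\to(N',F',\{F'_\tau\})$ be a morphism of KM fans, $\sigma\in F$, $\tau\in F'$ a cone containing $f_{\mathbb R}(\sigma)$, and $L'\subseteq N'$ a lifting of $F'_\tau$. (1) There exists a lifting $L\subseteq N$ of $F_\sigma$ with $f(L)\subseteq L'$. (2) If $f$ is injective on torsion subgroups $N_{\rm tor}\to N'_{\rm tor}$ (equivalently $\operatorname{Ker}f$ is torsion-free) and $f|_{F_\sigma}:F_\sigma\to F'_\tau$ is bijective, then the map $(N/F_\sigma)_{\rm tor}\to(N'/F'_\tau)_{\rm tor}$ induced by $f$ is injective. (3) If $(N/F_\sigma)_{\rm tor}\to(N'/F'_\tau)_{\rm tor}$ is injective, then $L:=f^{-1}(L')$ is a lifting of $F_\sigma$, and for this $L$ the induced map of finite groups $N/L\to N'/L'$ is injective. (4) If there is a lifting $L$ of $F_\sigma$ with $f(L)\subseteq L'$ and $N/L\to N'/L'$ injective, then $(N/F_\sigma)_{\rm tor}\to(N'/F'_\tau)_{\rm tor}$ is injective.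
   Context: For a finitely generated abelian group $N$, $N_{\mathbb R}=N\otimes\mathbb R$ and $N_{\rm tor}$ is its torsion subgroup; for a subgroup $A\subseteq N$ and $\sigma\subseteq N_{\mathbb R}$, $A\cap\sigma$ means elements of $A$ whose image lies in $\sigma$. A KM fan $(N,F,\{F_\sigma\})$: a finitely generated abelian group $N$, a fan $F$ in $N_{\mathbb R}$ (finite nonempty set of sharp cones generated by images of elements of $N$, closed under faces, pairwise meeting in common faces), and for each $\sigma\in F$ a torsion-free subgroup $F_\sigma$ of finite index in $N\cap\operatorname{Span}\sigma$, with $F_\tau=F_\sigma\cap\operatorname{Span}\tau$ for faces $\tau\le\sigma$. A morphism is a homomorphism $f:N\to N'$ such that for every $\sigma\in F$ some $\tau\in F'$ has $f_{\mathbb R}(\sigma)\subseteq\tau$ and $f(F_\sigma)\subseteq F'_\tau$. A lifting of the lattice datum $F_\sigma$ is a torsion-free subgroup $L\subseteq N$ with $N/L$ finite and $F_\sigma=L\cap\operatorname{Span}\sigma$. *)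

theory Defs
  imports "HOL-Analysis.Analysis"
begin

fun zmult :: "nat \<Rightarrow> 'a::ab_group_add \<Rightarrow> 'a" where
  "zmult 0 x = 0"
| "zmult (Suc n) x = x + zmult n x"

definition zmul :: "int \<Rightarrow> 'a::ab_group_add \<Rightarrow> 'a" where
  "zmul k x = (if k \<ge> 0 then zmult (nat k) x else - zmult (nat (- k)) x)"

inductive_set zgen :: "'a::ab_group_add set \<Rightarrow> 'a set" for G where
  zgen_zero: "0 \<in> zgen G"
| zgen_gen: "g \<in> G \<Longrightarrow> g \<in> zgen G"
| zgen_add: "a \<in> zgen G \<Longrightarrow> b \<in> zgen G \<Longrightarrow> a + b \<in> zgen G"
| zgen_neg: "a \<in> zgen G \<Longrightarrow> - a \<in> zgen G"

text \<open>The ambient group N is the whole type.\<close>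
definition fin_gen_group :: "'a::ab_group_add itself \<Rightarrow> bool" where
  "fin_gen_group _ \<longleftrightarrow> (\<exists>G::'a set. finite G \<and> zgen G = UNIV)"

definition zsubgroup :: "'a::ab_group_add set \<Rightarrow> bool" where
  "zsubgroup A \<longleftrightarrow> 0 \<in> A \<and> (\<forall>x\<in>A. \<forall>y\<in>A. x + y \<in> A) \<and> (\<forall>x\<in>A. - x \<in> A)"

definition torsion_free :: "'a::ab_group_add set \<Rightarrow> bool" where
  "torsion_free A \<longleftrightarrow> (\<forall>x\<in>A. \<forall>n>0. zmult n x = 0 \<longrightarrow> x = 0)"

definition torsion_part :: "'a::ab_group_add set" where
  "torsion_part = {x. \<exists>n>0. zmult n x = 0}"

definition cosets_in :: "'a::ab_group_add set \<Rightarrow> 'a set \<Rightarrow> 'a set set" where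
  "cosets_in B A = {(+) x ` A | x. x \<in> B}"

text \<open>Preimages of the torsion subgroup of N/A.\<close>
definition tor_mod :: "'a::ab_group_add set \<Rightarrow> 'a set" where
  "tor_mod A = {x. \<exists>n>0. zmult n x \<in> A}"

text \<open>rho : N \<rightarrow> V realises N_R as the real span of its image: rho is additive and
 integrally independent (modulo torsion) elements are sent to linearly independent vectors.
 N_R is then span (range rho).\<close>
definition realification :: "('a::ab_group_add \<Rightarrow> 'v::real_vector) \<Rightarrow> bool" where
  "realification \<rho> \<longleftrightarrow> Modules.additive \<rho> \<and>
     (\<forall>S. finite S \<and> inj_on \<rho> S \<and> dependent (\<rho> ` S) \<longrightarrow>
        (\<exists>c::'a \<Rightarrow> int. (\<exists>x\<in>S. c x \<noteq> 0) \<and> (\<Sum>x\<in>S. zmul (c x) x) \<in> torsion_part))"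

definition in_N :: "('a \<Rightarrow> 'v) \<Rightarrow> 'v set \<Rightarrow> 'a set" where
  "in_N \<rho> X = {x. \<rho> x \<in> X}"

definition gen_cone :: "'v::real_vector set \<Rightarrow> 'v set" where
  "gen_cone S = {(\<Sum>s\<in>S. c s *\<^sub>R s) | c. \<forall>s\<in>S. c s \<ge> 0}"

definition sharp :: "'v::real_vector set \<Rightarrow> bool" where
  "sharp \<sigma> \<longleftrightarrow> \<sigma> \<inter> uminus ` \<sigma> = {0}"

definition rat_cone :: "('a \<Rightarrow> 'v::real_vector) \<Rightarrow> 'v set \<Rightarrow> bool" where
  "rat_cone \<rho> \<sigma> \<longleftrightarrow> (\<exists>S. finite S \<and> \<sigma> = gen_cone (\<rho> ` S)) \<and> sharp \<sigma>"

definition is_face :: "'v::real_vector set \<Rightarrow> 'v set \<Rightarrow> bool" where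
  "is_face \<tau> \<sigma> \<longleftrightarrow> \<tau> face_of \<sigma> \<and> \<tau> \<noteq> {}"

definition is_fan :: "('a \<Rightarrow> 'v::real_vector) \<Rightarrow> 'v set set \<Rightarrow> bool" where
  "is_fan \<rho> F \<longleftrightarrow> finite F \<and> F \<noteq> {} \<and> (\<forall>\<sigma>\<in>F. rat_cone \<rho> \<sigma>) \<and>
     (\<forall>\<sigma>\<in>F. \<forall>\<tau>. is_face \<tau> \<sigma> \<longrightarrow> \<tau> \<in> F) \<and>
     (\<forall>\<sigma>\<in>F. \<forall>\<sigma>'\<in>F. is_face (\<sigma> \<inter> \<sigma>') \<sigma> \<and> is_face (\<sigma> \<inter> \<sigma>') \<sigma>')"

definition km_fan :: "('a::ab_group_add \<Rightarrow> 'v::real_vector) \<Rightarrow> 'v set set \<Rightarrow> ('v set \<Rightarrow> 'a set) \<Rightarrow> bool" where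
  "km_fan \<rho> F Fl \<longleftrightarrow> fin_gen_group TYPE('a) \<and> realification \<rho> \<and> is_fan \<rho> F \<and>
     (\<forall>\<sigma>\<in>F. zsubgroup (Fl \<sigma>) \<and> torsion_free (Fl \<sigma>) \<and> Fl \<sigma> \<subseteq> in_N \<rho> (span \<sigma>) \<and>
              finite (cosets_in (in_N \<rho> (span \<sigma>)) (Fl \<sigma>))) \<and>
     (\<forall>\<sigma>\<in>F. \<forall>\<tau>\<in>F. is_face \<tau> \<sigma> \<longrightarrow> Fl \<tau> = Fl \<sigma> \<inter> in_N \<rho> (span \<tau>))"

text \<open>fR is the real linear extension f_R of f (unique on N_R = span (range rho)).\<close>
definition km_morphism ::
  "('a::ab_group_add \<Rightarrow> 'v::real_vector) \<Rightarrow> 'v set set \<Rightarrow> ('v set \<Rightarrow> 'a set) \<Rightarrow>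
   ('b::ab_group_add \<Rightarrow> 'w::real_vector) \<Rightarrow> 'w set set \<Rightarrow> ('w set \<Rightarrow> 'b set) \<Rightarrow>
   ('a \<Rightarrow> 'b) \<Rightarrow> ('v \<Rightarrow> 'w) \<Rightarrow> bool" where
  "km_morphism \<rho> F Fl \<rho>' F' Fl' f fR \<longleftrightarrow> Modules.additive f \<and> linear fR \<and> (\<forall>x. fR (\<rho> x) = \<rho>' (f x)) \<and>
     (\<forall>\<sigma>\<in>F. \<exists>\<tau>\<in>F'. fR ` \<sigma> \<subseteq> \<tau> \<and> f ` (Fl \<sigma>) \<subseteq> Fl' \<tau>)"

definition lifting :: "('a::ab_group_add \<Rightarrow> 'v::real_vector) \<Rightarrow> ('v set \<Rightarrow> 'a set) \<Rightarrow> 'v set \<Rightarrow> 'a set \<Rightarrow> bool" where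
  "lifting \<rho> Fl \<sigma> L \<longleftrightarrow> zsubgroup L \<and> torsion_free L \<and> finite (cosets_in UNIV L) \<and>
     Fl \<sigma> = L \<inter> in_N \<rho> (span \<sigma>)"

text \<open>Injectivity of the induced map (N/A)_tor \<rightarrow> (N'/B)_tor, x + A \<mapsto> f x + B.\<close>
definition tor_quot_inj :: "('a::ab_group_add \<Rightarrow> 'b::ab_group_add) \<Rightarrow> 'a set \<Rightarrow> 'b set \<Rightarrow> bool" where
  "tor_quot_inj f A B \<longleftrightarrow> (\<forall>x\<in>tor_mod A. \<forall>y\<in>tor_mod A. f x - f y \<in> B \<longrightarrow> x - y \<in> A)"

definition quot_inj :: "('a::ab_group_add \<Rightarrow> 'b::ab_group_add) \<Rightarrow> 'a set \<Rightarrow> 'b set \<Rightarrow> bool" where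
  "quot_inj f A B \<longleftrightarrow> (\<forall>x y. f x - f y \<in> B \<longrightarrow> x - y \<in> A)"

end

theory Submission
  imports Defs
begin


lemma zmult_add_n: "zmult (m + n) x = zmult m x + zmult n x"
  by (induction m) (auto simp: add.assoc)

lemma zmult_mult: "zmult (m * n) x = zmult m (zmult n x)"
  by (induction m) (auto simp: zmult_add_n)

lemma zmult_plus: "zmult n (x + y) = zmult n x + zmult n y"
  by (induction n) (auto simp: algebra_simps)

lemma zmult_zero[simp]: "zmult n 0 = 0"
  by (induction n) auto

lemma zmult_neg: "zmult n (- x) = - zmult n x"
  by (induction n) (auto simp: algebra_simps)

lemma zmult_diff: "zmult n (x - y) = zmult n x - zmult n y"
  using zmult_plus[of n x "-y"] by (simp add: zmult_neg)

lemma zmult_one[simp]: "zmult 1 x = x" by simp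

lemma additive_zmult: "Modules.additive f \<Longrightarrow> f (zmult n x) = zmult n (f x)"
  by (induction n) (auto simp: additive.add additive.zero)

lemma additive_zmult_R: "Modules.additive (\<rho>::'a::ab_group_add \<Rightarrow> 'v::real_vector) \<Longrightarrow>
   \<rho> (zmult n x) = real n *\<^sub>R \<rho> x"
  by (induction n) (auto simp: additive.add additive.zero algebra_simps)

lemma zsub_zmult: "zsubgroup A \<Longrightarrow> x \<in> A \<Longrightarrow> zmult n x \<in> A"
  by (induction n) (auto simp: zsubgroup_def)

lemma zsub_diff: "zsubgroup A \<Longrightarrow> x \<in> A \<Longrightarrow> y \<in> A \<Longrightarrow> x - y \<in> A"
  unfolding zsubgroup_def by (metis diff_conv_add_uminus)

lemma coset_eq_diff: "zsubgroup A \<Longrightarrow> (+) a ` A = (+) b ` A \<Longrightarrow> a - b \<in> A"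
proof -
  assume A: "zsubgroup A" and e: "(+) a ` A = (+) b ` A"
  have "a \<in> (+) a ` A" using A by (force simp: zsubgroup_def)
  then obtain c where "c \<in> A" "a = b + c" using e by auto
  then show ?thesis by simp
qed

lemma coset_eq: "zsubgroup A \<Longrightarrow> a - b \<in> A \<Longrightarrow> (+) a ` A = (+) b ` A"
proof -
  assume A: "zsubgroup A" and d: "a - b \<in> A"
  have 1: "(+) a ` A \<subseteq> (+) b ` A" if "a - b \<in> A" for a b
  proof
    fix y assume "y \<in> (+) a ` A"
    then obtain c where c: "c \<in> A" "y = a + c" by auto
    have "(a - b) + c \<in> A" using A c that by (auto simp: zsubgroup_def)
    moreover have "y = b + ((a - b) + c)" using c by simp
    ultimately show "y \<in> (+) b ` A" by blast
  qed
  have "b - a \<in> A" using A d unfolding zsubgroup_def by (metis minus_diff_eq)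
  then show ?thesis using 1[OF d] 1[of b a] by blast
qed

lemma pigeon:
  assumes A: "zsubgroup A" and fin: "finite (cosets_in B A)"
    and B: "\<And>n. zmult n x \<in> B"
  shows "\<exists>k>0. k \<le> card (cosets_in B A) \<and> zmult k x \<in> A"
proof -
  let ?n = "card (cosets_in B A)"
  let ?h = "\<lambda>i. (+) (zmult i x) ` A"
  have sub: "?h ` {0..?n} \<subseteq> cosets_in B A" using B unfolding cosets_in_def by blast
  have "\<not> inj_on ?h {0..?n}"
  proof
    assume "inj_on ?h {0..?n}"
    from card_inj_on_le[OF this sub fin] show False by simp
  qed
  then obtain i j where ij: "i \<in> {0..?n}" "j \<in> {0..?n}" "i < j" "?h i = ?h j"
    unfolding inj_on_def by (metis linorder_neqE_nat)
  have "zmult j x - zmult i x \<in> A" using coset_eq_diff[OF A] ij(4) by metis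
  moreover have "zmult j x = zmult (j - i) x + zmult i x"
    using ij(3) zmult_add_n[of "j-i" i x] by simp
  ultimately have "zmult (j - i) x \<in> A" by simp
  then show ?thesis using ij by (intro exI[of _ "j - i"]) auto
qed

lemma uniform_mult:
  assumes A: "zsubgroup A" and fin: "finite (cosets_in B A)"
    and B: "\<And>x n. x \<in> B \<Longrightarrow> zmult n x \<in> B"
  shows "\<exists>m>0. \<forall>x\<in>B. zmult m x \<in> A"
proof (intro exI[of _ "fact (card (cosets_in B A))"] conjI ballI)
  show "fact (card (cosets_in B A)) > (0::nat)" by simp
  fix x assume "x \<in> B"
  then obtain k where k: "k > 0" "k \<le> card (cosets_in B A)" "zmult k x \<in> A"
    using pigeon[OF A fin, of x] B by blast
  have "k dvd fact (card (cosets_in B A))" using k by (simp add: dvd_fact)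
  then obtain j where "fact (card (cosets_in B A)) = j * k" by (metis dvd_def mult.commute)
  then show "zmult (fact (card (cosets_in B A))) x \<in> A"
    using zsub_zmult[OF A k(3)] by (simp add: zmult_mult)
qed


lemma zgen_rep:
  assumes G: "finite G" and x: "x \<in> zgen G"
  shows "\<exists>p q. x = (\<Sum>g\<in>G. zmult (p g) g) - (\<Sum>g\<in>G. zmult (q g) g)"
  using x
proof induction
  case zgen_zero
  show ?case by (intro exI[of _ "\<lambda>_. 0"]) simp
next
  case (zgen_gen g)
  have "(\<Sum>h\<in>G. zmult (if h = g then 1 else 0) h) = (\<Sum>h\<in>G. if h = g then h else 0)"
    by (rule sum.cong) auto
  also have "\<dots> = g" using zgen_gen G by (simp add: sum.delta')
  finally show ?case by (intro exI[of _ "\<lambda>h. if h = g then 1 else 0"] exI[of _ "\<lambda>_. 0"]) simp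
next
  case (zgen_add a b)
  then obtain p1 q1 p2 q2 where "a = (\<Sum>g\<in>G. zmult (p1 g) g) - (\<Sum>g\<in>G. zmult (q1 g) g)"
     "b = (\<Sum>g\<in>G. zmult (p2 g) g) - (\<Sum>g\<in>G. zmult (q2 g) g)" by blast
  moreover have "(\<Sum>g\<in>G. zmult (r1 g + r2 g) g) = (\<Sum>g\<in>G. zmult (r1 g) g) + (\<Sum>g\<in>G. zmult (r2 g) g)" for r1 r2
    by (simp add: zmult_add_n sum.distrib)
  ultimately show ?case
    by (intro exI[of _ "\<lambda>g. p1 g + p2 g"] exI[of _ "\<lambda>g. q1 g + q2 g"])
       (simp only:, simp add: algebra_simps)
next
  case (zgen_neg a)
  then obtain p q where "a = (\<Sum>g\<in>G. zmult (p g) g) - (\<Sum>g\<in>G. zmult (q g) g)" by blast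
  then show ?case by (intro exI[of _ q] exI[of _ p]) simp
qed

lemma fg_finite:
  assumes fg: "fin_gen_group TYPE('a::ab_group_add)" and A: "zsubgroup (A::'a set)"
    and m: "m > 0" and mA: "\<And>x. zmult m x \<in> A"
  shows "finite (cosets_in UNIV A)"
proof -
  obtain G :: "'a set" where G: "finite G" "zgen G = UNIV" using fg unfolding fin_gen_group_def by blast
  define S where "S p = (\<Sum>g\<in>G. zmult (p g) g)" for p
  define P where "P = Pi\<^sub>E G (\<lambda>_. {..<m})"
  have finP: "finite P" unfolding P_def using G by (simp add: finite_PiE)
  have "cosets_in UNIV A \<subseteq> (\<lambda>(p, q). (+) (S p - S q) ` A) ` (P \<times> P)"
  proof
    fix C assume "C \<in> cosets_in UNIV A"
    then obtain x where C: "C = (+) x ` A" unfolding cosets_in_def by blast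
    obtain p q where x: "x = S p - S q" using zgen_rep[OF G(1), of x] G(2) unfolding S_def by blast
    define p' where "p' = restrict (\<lambda>g. p g mod m) G"
    define q' where "q' = restrict (\<lambda>g. q g mod m) G"
    have pP: "p' \<in> P" "q' \<in> P" unfolding p'_def q'_def P_def using m by auto
    have red: "S r - S (restrict (\<lambda>g. r g mod m) G) \<in> A" for r
    proof -
      have "S r - S (restrict (\<lambda>g. r g mod m) G) = (\<Sum>g\<in>G. zmult (r g) g - zmult (r g mod m) g)"
        unfolding S_def by (simp add: sum_subtractf)
      also have "\<dots> = (\<Sum>g\<in>G. zmult m (zmult (r g div m) g))"
      proof (rule sum.cong)
        fix g
        have "zmult (r g) g = zmult (m * (r g div m) + r g mod m) g" by simp
        then show "zmult (r g) g - zmult (r g mod m) g = zmult m (zmult (r g div m) g)"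
          by (simp only: zmult_add_n zmult_mult) simp
      qed simp
      also have "\<dots> \<in> A"
      proof -
        have "\<forall>B. finite B \<longrightarrow> (\<Sum>g\<in>B. zmult m (zmult (r g div m) g)) \<in> A"
        proof (intro allI impI)
          fix B :: "'a set" assume "finite B"
          then show "(\<Sum>g\<in>B. zmult m (zmult (r g div m) g)) \<in> A"
            by (induction B rule: finite_induct) (use A mA in \<open>auto simp: zsubgroup_def\<close>)
        qed
        then show ?thesis using G by blast
      qed
      finally show ?thesis .
    qed
    have "x - (S p' - S q') = (S p - S p') - (S q - S q')" using x by simp
    also have "\<dots> \<in> A" using red[of p] red[of q] zsub_diff[OF A] unfolding p'_def q'_def by blast
    finally have "C = (+) (S p' - S q') ` A" using C coset_eq[OF A] by blast
    then show "C \<in> (\<lambda>(p, q). (+) (S p - S q) ` A) ` (P \<times> P)" using pP by blast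
  qed
  moreover have "finite ((\<lambda>(p, q). (+) (S p - S q) ` A) ` (P \<times> P))" using finP by simp
  ultimately show ?thesis by (rule finite_subset)
qed



lemma inN_subgroup: "Modules.additive \<rho> \<Longrightarrow> zsubgroup (in_N \<rho> (span S))"
  unfolding zsubgroup_def in_N_def
  by (auto simp: additive.add additive.zero additive.minus span_add span_neg span_zero)

lemma inN_sat: "Modules.additive (\<rho>::'a::ab_group_add \<Rightarrow> 'v::real_vector) \<Longrightarrow> n > 0 \<Longrightarrow>
    zmult n x \<in> in_N \<rho> (span S) \<Longrightarrow> x \<in> in_N \<rho> (span S)"
proof -
  assume a: "Modules.additive \<rho>" "n > 0" "zmult n x \<in> in_N \<rho> (span S)"
  then have "real n *\<^sub>R \<rho> x \<in> span S" by (simp add: in_N_def additive_zmult_R)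
  then have "inverse (real n) *\<^sub>R (real n *\<^sub>R \<rho> x) \<in> span S" by (rule span_mul)
  then show ?thesis using a(2) by (simp add: in_N_def)
qed

lemma inN_tors: "Modules.additive (\<rho>::'a::ab_group_add \<Rightarrow> 'v::real_vector) \<Longrightarrow> n > 0 \<Longrightarrow>
    zmult n x = 0 \<Longrightarrow> x \<in> in_N \<rho> (span S)"
  by (rule inN_sat[of \<rho> n]) (auto simp: in_N_def additive.zero span_zero)

theorem lemma2p5p6:
  fixes \<rho> :: "'a::ab_group_add \<Rightarrow> 'v::real_vector"
    and \<rho>' :: "'b::ab_group_add \<Rightarrow> 'w::real_vector"
    and F :: "'v set set" and Fl :: "'v set \<Rightarrow> 'a set"
    and F' :: "'w set set" and Fl' :: "'w set \<Rightarrow> 'b set"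
    and f :: "'a \<Rightarrow> 'b" and fR :: "'v \<Rightarrow> 'w"
  assumes "km_fan \<rho> F Fl" and "km_fan \<rho>' F' Fl'"
    and "km_morphism \<rho> F Fl \<rho>' F' Fl' f fR"
    and "\<sigma> \<in> F" and "\<tau> \<in> F'" and "fR ` \<sigma> \<subseteq> \<tau>"
    and "lifting \<rho>' Fl' \<tau> L'"
  shows "(\<exists>L. lifting \<rho> Fl \<sigma> L \<and> f ` L \<subseteq> L')
    \<and> (inj_on f (torsion_part :: 'a set) \<and> bij_betw f (Fl \<sigma>) (Fl' \<tau>)
           \<longrightarrow> tor_quot_inj f (Fl \<sigma>) (Fl' \<tau>))
    \<and> (tor_quot_inj f (Fl \<sigma>) (Fl' \<tau>)
           \<longrightarrow> lifting \<rho> Fl \<sigma> (f -` L') \<and> quot_inj f (f -` L') L')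
    \<and> ((\<exists>L. lifting \<rho> Fl \<sigma> L \<and> f ` L \<subseteq> L' \<and> quot_inj f L L')
           \<longrightarrow> tor_quot_inj f (Fl \<sigma>) (Fl' \<tau>))"
proof -
  note km1 = assms(1)[unfolded km_fan_def] and km2 = assms(2)[unfolded km_fan_def]
  note mor = assms(3)[unfolded km_morphism_def]
  have radd: "Modules.additive \<rho>" using km1 by (simp add: realification_def)
  have radd': "Modules.additive \<rho>'" using km2 by (simp add: realification_def)
  have fadd: "Modules.additive f" and lin: "linear fR" and comm: "\<And>x. fR (\<rho> x) = \<rho>' (f x)"
    using mor by auto
  have fg: "fin_gen_group TYPE('a)" using km1 by simp
  define N\<sigma> where "N\<sigma> = in_N \<rho> (span \<sigma>)"
  have NS: "zsubgroup N\<sigma>" unfolding N\<sigma>_def by (rule inN_subgroup[OF radd])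
  have sat: "\<And>n x. n > 0 \<Longrightarrow> zmult n x \<in> N\<sigma> \<Longrightarrow> x \<in> N\<sigma>" unfolding N\<sigma>_def using inN_sat[OF radd] by blast
  have tors: "\<And>n x. n > 0 \<Longrightarrow> zmult n x = 0 \<Longrightarrow> x \<in> N\<sigma>" unfolding N\<sigma>_def using inN_tors[OF radd] by blast
  have tors': "\<And>n y. n > 0 \<Longrightarrow> zmult n y = 0 \<Longrightarrow> y \<in> in_N \<rho>' (span \<tau>)" using inN_tors[OF radd'] by blast
  have FS: "zsubgroup (Fl \<sigma>)" "torsion_free (Fl \<sigma>)" "Fl \<sigma> \<subseteq> N\<sigma>" "finite (cosets_in N\<sigma> (Fl \<sigma>))"
    using km1 assms(4) unfolding N\<sigma>_def by auto
  have Lp: "zsubgroup L'" "torsion_free L'" "finite (cosets_in UNIV L')" "Fl' \<tau> = L' \<inter> in_N \<rho>' (span \<tau>)"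
    using assms(7) unfolding lifting_def by auto
  obtain M1 where M1: "M1 > 0" "\<And>x. x \<in> N\<sigma> \<Longrightarrow> zmult M1 x \<in> Fl \<sigma>"
    using uniform_mult[OF FS(1) FS(4)] zsub_zmult[OF NS] by blast
  obtain M2 where M2: "M2 > 0" "\<And>y. zmult M2 y \<in> L'"
    using uniform_mult[OF Lp(1) Lp(3)] by blast
  have fspan: "\<rho>' (f x) \<in> span \<tau>" if "x \<in> N\<sigma>" for x
  proof -
    have "\<rho>' (f x) \<in> fR ` span \<sigma>" using that comm[of x] unfolding N\<sigma>_def in_N_def by (metis imageI mem_Collect_eq)
    also have "\<dots> = span (fR ` \<sigma>)" using lin by (simp add: span_linear_image)
    also have "\<dots> \<subseteq> span \<tau>" using assms(6) by (rule span_mono)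
    finally show ?thesis .
  qed
  have Fimg: "f ` Fl \<sigma> \<subseteq> Fl' \<tau>"
  proof -
    obtain \<tau>0 where t0: "\<tau>0 \<in> F'" "fR ` \<sigma> \<subseteq> \<tau>0" "f ` Fl \<sigma> \<subseteq> Fl' \<tau>0" using mor assms(4) by blast
    let ?t = "\<tau> \<inter> \<tau>0"
    have fan: "is_fan \<rho>' F'" using km2 by simp
    have fa: "is_face ?t \<tau>" "is_face ?t \<tau>0" using fan t0(1) assms(5) unfolding is_fan_def by auto
    have tF: "?t \<in> F'" using fan fa(1) assms(5) unfolding is_fan_def by blast
    have e1: "Fl' ?t = Fl' \<tau> \<inter> in_N \<rho>' (span ?t)" using km2 fa(1) tF assms(5) by blast
    have e2: "Fl' ?t = Fl' \<tau>0 \<inter> in_N \<rho>' (span ?t)" using km2 fa(2) tF t0(1) by blast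
    show ?thesis
    proof
      fix y assume "y \<in> f ` Fl \<sigma>"
      then obtain x where x: "x \<in> Fl \<sigma>" "y = f x" by blast
      have "\<rho>' (f x) \<in> fR ` span \<sigma>" using x FS(3) comm[of x] unfolding N\<sigma>_def in_N_def by (metis imageI mem_Collect_eq subsetD)
      also have "\<dots> = span (fR ` \<sigma>)" using lin by (simp add: span_linear_image)
      also have "\<dots> \<subseteq> span ?t" using assms(6) t0(2) by (intro span_mono) auto
      finally have "y \<in> in_N \<rho>' (span ?t)" using x by (simp add: in_N_def)
      then have "y \<in> Fl' ?t" using e2 t0(3) x by blast
      then show "y \<in> Fl' \<tau>" using e1 by blast
    qed
  qed
  have part1: "\<exists>L. lifting \<rho> Fl \<sigma> L \<and> f ` L \<subseteq> L'"
  proof -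
    define m where "m = M1 * M2"
    have m: "m > 0" using M1 M2 by (simp add: m_def)
    have mN: "zmult m x \<in> Fl \<sigma>" if "x \<in> N\<sigma>" for x
      unfolding m_def mult.commute[of M1] zmult_mult using zsub_zmult[OF FS(1) M1(2)[OF that]] .
    have mL: "f (zmult m x) \<in> L'" for x
      unfolding m_def zmult_mult additive_zmult[OF fadd] using zsub_zmult[OF Lp(1) M2(2)] .
    define L where "L = {a + zmult m x | a x. a \<in> Fl \<sigma>}"
    have Lmem: "a + zmult m x \<in> L" if "a \<in> Fl \<sigma>" for a x unfolding L_def using that by blast
    have F0: "0 \<in> Fl \<sigma>" using FS(1) by (simp add: zsubgroup_def)
    have Fa: "a \<in> L" if "a \<in> Fl \<sigma>" for a using Lmem[OF that, of 0] by simp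
    have mxL: "zmult m x \<in> L" for x using Lmem[OF F0, of x] by simp
    have Lsub: "zsubgroup L"
    proof -
      have "0 \<in> L" using Fa[OF F0] .
      moreover have "x + y \<in> L" if xl: "x \<in> L" "y \<in> L" for x y
      proof -
        obtain a u b v where ab: "a \<in> Fl \<sigma>" "b \<in> Fl \<sigma>" "x = a + zmult m u" "y = b + zmult m v"
          using xl unfolding L_def by blast
        have e: "x + y = (a + b) + zmult m (u + v)"
          using ab by (simp add: zmult_plus algebra_simps)
        have "a + b \<in> Fl \<sigma>" using FS(1) ab unfolding zsubgroup_def by blast
        then show ?thesis unfolding e by (rule Lmem)
      qed
      moreover have "- x \<in> L" if xl: "x \<in> L" for x
      proof -
        obtain a u where au: "a \<in> Fl \<sigma>" "x = a + zmult m u" using xl unfolding L_def by blast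
        have e: "- x = (- a) + zmult m (- u)" using au by (simp add: zmult_neg)
        have "- a \<in> Fl \<sigma>" using FS(1) au unfolding zsubgroup_def by blast
        then show ?thesis unfolding e by (rule Lmem)
      qed
      ultimately show ?thesis unfolding zsubgroup_def by blast
    qed
    have LN: "L \<inter> N\<sigma> = Fl \<sigma>"
    proof
      show "Fl \<sigma> \<subseteq> L \<inter> N\<sigma>" using FS(3) Fa by blast
      show "L \<inter> N\<sigma> \<subseteq> Fl \<sigma>"
      proof
        fix z assume z: "z \<in> L \<inter> N\<sigma>"
        then obtain a x where ax: "a \<in> Fl \<sigma>" "z = a + zmult m x" unfolding L_def by blast
        have "zmult m x = z - a" using ax by simp
        also have "\<dots> \<in> N\<sigma>" using zsub_diff[OF NS] z ax FS(3) by blast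
        finally have "x \<in> N\<sigma>" using sat m by blast
        then have "zmult m x \<in> Fl \<sigma>" by (rule mN)
        then show "z \<in> Fl \<sigma>" using ax FS(1) unfolding zsubgroup_def by auto
      qed
    qed
    have "lifting \<rho> Fl \<sigma> L"
      unfolding lifting_def
    proof (intro conjI)
      show "zsubgroup L" by (rule Lsub)
      show "torsion_free L" unfolding torsion_free_def
      proof (intro ballI allI impI)
        fix z n assume z: "z \<in> L" "0 < n" "zmult n z = 0"
        then have "z \<in> Fl \<sigma>" using tors LN by blast
        then show "z = 0" using FS(2) z unfolding torsion_free_def by blast
      qed
      show "finite (cosets_in UNIV L)"
        by (rule fg_finite[OF fg Lsub m]) (rule mxL)
      show "Fl \<sigma> = L \<inter> in_N \<rho> (span \<sigma>)" using LN unfolding N\<sigma>_def by simp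
    qed
    moreover have "f ` L \<subseteq> L'"
    proof
      fix y assume "y \<in> f ` L"
      then obtain a x where ax: "a \<in> Fl \<sigma>" "y = f (a + zmult m x)" unfolding L_def by blast
      have "f a \<in> L'" using Fimg ax Lp(4) by blast
      then show "y \<in> L'" using ax mL[of x] Lp(1) by (simp add: additive.add[OF fadd] zsubgroup_def)
    qed
    ultimately show ?thesis by blast
  qed
  have tm: "\<exists>k>0. zmult k (x - y) \<in> Fl \<sigma>" if xt: "x \<in> tor_mod (Fl \<sigma>)" "y \<in> tor_mod (Fl \<sigma>)" for x y
  proof -
    obtain a where a: "a > 0" "zmult a x \<in> Fl \<sigma>" using xt(1) unfolding tor_mod_def by auto
    obtain b where b: "b > 0" "zmult b y \<in> Fl \<sigma>" using xt(2) unfolding tor_mod_def by auto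
    note ab = a b
    have 1: "zmult b (zmult a x) \<in> Fl \<sigma>" by (rule zsub_zmult[OF FS(1) ab(2)])
    have 2: "zmult a (zmult b y) \<in> Fl \<sigma>" by (rule zsub_zmult[OF FS(1) ab(4)])
    have "zmult b (zmult a x) - zmult a (zmult b y) \<in> Fl \<sigma>" by (rule zsub_diff[OF FS(1) 1 2])
    moreover have "zmult b (zmult a x) = zmult (a*b) x" "zmult a (zmult b y) = zmult (a*b) y"
      by (simp_all only: zmult_mult[symmetric] mult.commute)
    ultimately have "zmult (a*b) (x - y) \<in> Fl \<sigma>" by (simp add: zmult_diff)
    then show ?thesis using ab by (intro exI[of _ "a*b"]) auto
  qed
  have part2: "inj_on f (torsion_part :: 'a set) \<and> bij_betw f (Fl \<sigma>) (Fl' \<tau>)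
           \<longrightarrow> tor_quot_inj f (Fl \<sigma>) (Fl' \<tau>)"
  proof (intro impI, elim conjE)
    assume it: "inj_on f (torsion_part :: 'a set)" and bj: "bij_betw f (Fl \<sigma>) (Fl' \<tau>)"
    show "tor_quot_inj f (Fl \<sigma>) (Fl' \<tau>)" unfolding tor_quot_inj_def
    proof (intro ballI impI)
      fix x y assume xy: "x \<in> tor_mod (Fl \<sigma>)" "y \<in> tor_mod (Fl \<sigma>)" "f x - f y \<in> Fl' \<tau>"
      define z where "z = x - y"
      obtain k where k: "k > 0" "zmult k z \<in> Fl \<sigma>" using tm[OF xy(1,2)] unfolding z_def by blast
      have "f z \<in> Fl' \<tau>" using xy(3) by (simp add: z_def additive.diff[OF fadd])
      then obtain a where a: "a \<in> Fl \<sigma>" "f a = f z" using bj unfolding bij_betw_def by (metis imageE)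
      have fz0: "f (z - a) = 0" using a by (simp add: additive.diff[OF fadd])
      have "zmult k (z - a) \<in> Fl \<sigma>" using k zsub_zmult[OF FS(1) a(1)] zsub_diff[OF FS(1)] by (simp add: zmult_diff)
      moreover have "f (zmult k (z - a)) = f 0" using fz0 by (simp add: additive_zmult[OF fadd] additive.zero[OF fadd])
      moreover have "0 \<in> Fl \<sigma>" using FS(1) by (simp add: zsubgroup_def)
      ultimately have "zmult k (z - a) = 0" using bj unfolding bij_betw_def inj_on_def by blast
      then have "z - a \<in> torsion_part" using k unfolding torsion_part_def by blast
      moreover have "0 \<in> (torsion_part :: 'a set)" unfolding torsion_part_def by (intro CollectI exI[of _ 1]) simp
      moreover have "f (z - a) = f 0" using fz0 by (simp add: additive.zero[OF fadd])
      ultimately have "z - a = 0" using it unfolding inj_on_def by blast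
      then show "x - y \<in> Fl \<sigma>" using a unfolding z_def by simp
    qed
  qed
  have part3: "tor_quot_inj f (Fl \<sigma>) (Fl' \<tau>)
           \<longrightarrow> lifting \<rho> Fl \<sigma> (f -` L') \<and> quot_inj f (f -` L') L'"
  proof
    assume ti: "tor_quot_inj f (Fl \<sigma>) (Fl' \<tau>)"
    have zero_tm: "0 \<in> tor_mod (Fl \<sigma>)" using FS(1) unfolding tor_mod_def zsubgroup_def
      by (intro CollectI exI[of _ 1]) simp
    have key: "x \<in> Fl \<sigma>" if "x \<in> tor_mod (Fl \<sigma>)" "f x \<in> Fl' \<tau>" for x
      using ti that zero_tm unfolding tor_quot_inj_def by (force simp: additive.zero[OF fadd])
    have Ls: "zsubgroup (f -` L')" using Lp(1) unfolding zsubgroup_def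
      by (simp add: additive.zero[OF fadd] additive.add[OF fadd] additive.minus[OF fadd])
    have "lifting \<rho> Fl \<sigma> (f -` L')" unfolding lifting_def
    proof (intro conjI)
      show "zsubgroup (f -` L')" by (rule Ls)
      show "torsion_free (f -` L')" unfolding torsion_free_def
      proof (intro ballI allI impI)
        fix z n assume z: "z \<in> f -` L'" "0 < n" "zmult n z = 0"
        have "z \<in> tor_mod (Fl \<sigma>)" using z FS(1) unfolding tor_mod_def zsubgroup_def by auto
        moreover have "zmult n (f z) = 0" using z by (simp add: additive_zmult[OF fadd, symmetric] additive.zero[OF fadd])
        then have "f z \<in> Fl' \<tau>" using tors' z Lp(4) by blast
        ultimately have "z \<in> Fl \<sigma>" by (rule key)
        then show "z = 0" using FS(2) z unfolding torsion_free_def by blast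
      qed
      show "finite (cosets_in UNIV (f -` L'))"
        by (rule fg_finite[OF fg Ls M2(1)]) (simp add: additive_zmult[OF fadd] M2(2))
      show "Fl \<sigma> = f -` L' \<inter> in_N \<rho> (span \<sigma>)"
      proof
        show "Fl \<sigma> \<subseteq> f -` L' \<inter> in_N \<rho> (span \<sigma>)" using Fimg Lp(4) FS(3) unfolding N\<sigma>_def by blast
        show "f -` L' \<inter> in_N \<rho> (span \<sigma>) \<subseteq> Fl \<sigma>"
        proof
          fix x assume x: "x \<in> f -` L' \<inter> in_N \<rho> (span \<sigma>)"
          then have "x \<in> tor_mod (Fl \<sigma>)" using M1 unfolding tor_mod_def N\<sigma>_def by blast
          moreover have "f x \<in> Fl' \<tau>" using x fspan Lp(4) unfolding N\<sigma>_def in_N_def by auto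
          ultimately show "x \<in> Fl \<sigma>" by (rule key)
        qed
      qed
    qed
    moreover have "quot_inj f (f -` L') L'" unfolding quot_inj_def
      by (simp add: additive.diff[OF fadd])
    ultimately show "lifting \<rho> Fl \<sigma> (f -` L') \<and> quot_inj f (f -` L') L'" ..
  qed
  have part4: "(\<exists>L. lifting \<rho> Fl \<sigma> L \<and> f ` L \<subseteq> L' \<and> quot_inj f L L')
           \<longrightarrow> tor_quot_inj f (Fl \<sigma>) (Fl' \<tau>)"
  proof (intro impI, elim exE conjE)
    fix L assume L: "lifting \<rho> Fl \<sigma> L" "quot_inj f L L'"
    show "tor_quot_inj f (Fl \<sigma>) (Fl' \<tau>)" unfolding tor_quot_inj_def
    proof (intro ballI impI)
      fix x y assume xy: "x \<in> tor_mod (Fl \<sigma>)" "y \<in> tor_mod (Fl \<sigma>)" "f x - f y \<in> Fl' \<tau>"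
      obtain k where k: "k > 0" "zmult k (x - y) \<in> Fl \<sigma>" using tm[OF xy(1,2)] by blast
      have "x - y \<in> N\<sigma>" using sat k FS(3) by blast
      moreover have "x - y \<in> L" using L(2) xy(3) Lp(4) unfolding quot_inj_def by blast
      ultimately show "x - y \<in> Fl \<sigma>" using L(1) unfolding lifting_def N\<sigma>_def by blast
    qed
  qed
  show ?thesis using part1 part2 part3 part4 by blast
qed

end
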